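(* Let $k\ge1$, let $A,B_1,\dots,B_k,C_1,\dots,C_k\in\mathbb{C}^{r\times r}$ with $C_i+mI$ invertible for all integers $m\ge0$ and all $i$, and assume $AB_i=B_iA$, $B_iB_j=B_jB_i$, $C_iC_j=C_jC_i$ for all $i,j$. Let $n\ge1$ and suppose $A+mI$ is invertible for all $m\ge0$. Then $$F_{\mathcal A}[A+nI]=\sum_{N_k\le n}\binom{n}{n_1,\dots,n_k}\prod_{i=1}^k (B_i)_{n_i}x_i^{n_i}\;F_{\mathcal A}[A+N_kI,\,B_1+n_1I,\dots,B_k+n_kI,\,C_1+n_1I,\dots,C_k+n_kI]\;\prod_{i=1}^k (C_i)^{-1}_{n_i}.$$ Furthermore, if $A-n_1I$ is invertible for all $0\le n_1\le n$, then $$F_{\mathcal A}[A-nI]=\sum_{N_k\le n}\binom{n}{n_1,\dots,n_k}\prod_{i=1}^k (B_i)_{n_i}(-x_i)^{n_i}\;F_{\mathcal A}[B_1+n_1I,\dots,B_k+n_kI,\,C_1+n_1I,\dots,C_k+n_kI]\;\prod_{i=1}^k (C_i)^{-1}_{n_i}.$$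
   Context: For $M\in\mathbb{C}^{r\times r}$: $(M)_0=I$, $(M)_m=M(M+I)\cdots(M+(m-1)I)$, $(M)^{-1}_m=((M)_m)^{-1}$. $$F_{\mathcal A}=F_{\mathcal A}[A,B_1,\dots,B_k;C_1,\dots,C_k;x_1,\dots,x_k]=\sum_{m_1,\dots,m_k\ge0}(A)_{m_1+\cdots+m_k}\prod_{i=1}^k(B_i)_{m_i}\prod_{i=1}^k(C_i)^{-1}_{m_i}\prod_{i=1}^k\frac{x_i^{m_i}}{m_i!},$$ $x_i$ scalar variables, matrix products in order of increasing index; identities are of formal power series in the $x_i$. Bracket notation $F_{\mathcal A}[\dots]$ lists only the shifted parameters (others unchanged). The sum runs over all tuples $(n_1,\dots,n_k)$ of nonnegative integers with $N_k:=n_1+\cdots+n_k\le n$, and $\binom{n}{n_1,\dots,n_k}:=\frac{n!}{n_1!\cdots n_k!\,(n-N_k)!}$. In the second formula the parameter $A$ is unshifted. *)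

theory Defs
  imports "HOL-Analysis.Analysis"
begin

text \<open>Formal power series in x_1..x_k (indices 0..k-1 here) with matrix coefficients are
  represented by their coefficient functions (nat => nat) => matrix, a multi-index m
  standing for the monomial prod_{i<k} x_i^(m i); coefficients at multi-indices with
  support outside {..<k} are 0.\<close>

fun mprod :: "nat \<Rightarrow> (nat \<Rightarrow> complex^'r^'r) \<Rightarrow> complex^'r^'r" where
  "mprod 0 f = mat 1"
| "mprod (Suc j) f = mprod j f ** f j"

definition mpoch :: "complex^'r^'r \<Rightarrow> nat \<Rightarrow> complex^'r^'r" where
  "mpoch M m = mprod m (\<lambda>j. M + mat (of_nat j))"

definition mpoch_inv :: "complex^'r^'r \<Rightarrow> nat \<Rightarrow> complex^'r^'r" where
  "mpoch_inv M m = matrix_inv (mpoch M m)"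

text \<open>Coefficient of x^m in F_A[A,B_1..B_k;C_1..C_k;x_1..x_k].\<close>
definition FA :: "nat \<Rightarrow> complex^'r^'r \<Rightarrow> (nat \<Rightarrow> complex^'r^'r) \<Rightarrow> (nat \<Rightarrow> complex^'r^'r)
                  \<Rightarrow> (nat \<Rightarrow> nat) \<Rightarrow> complex^'r^'r" where
  "FA k A B C m = (if \<forall>i\<ge>k. m i = 0 then
      (1 / (\<Prod>i<k. fact (m i) :: real)) *\<^sub>R
        (mpoch A (\<Sum>i<k. m i) ** mprod k (\<lambda>i. mpoch (B i) (m i)) ** mprod k (\<lambda>i. mpoch_inv (C i) (m i)))
    else 0)"

text \<open>Multiplication of a series f by the monomial prod_{i<k} (c_i x_i)^(nu i).\<close>
definition xmono :: "nat \<Rightarrow> (nat \<Rightarrow> real) \<Rightarrow> (nat \<Rightarrow> nat) \<Rightarrow> ((nat \<Rightarrow> nat) \<Rightarrow> complex^'r^'r)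
                     \<Rightarrow> (nat \<Rightarrow> nat) \<Rightarrow> complex^'r^'r" where
  "xmono k c nu f m = (if \<forall>i. nu i \<le> m i then (\<Prod>i<k. c i ^ nu i) *\<^sub>R f (\<lambda>i. m i - nu i) else 0)"

definition tuples :: "nat \<Rightarrow> nat \<Rightarrow> (nat \<Rightarrow> nat) set" where
  "tuples k n = {nu. (\<forall>i\<ge>k. nu i = 0) \<and> (\<Sum>i<k. nu i) \<le> n}"

definition multinom :: "nat \<Rightarrow> nat \<Rightarrow> (nat \<Rightarrow> nat) \<Rightarrow> real" where
  "multinom n k nu = fact n / ((\<Prod>i<k. fact (nu i)) * fact (n - (\<Sum>i<k. nu i)))"

end

theory Submission
  imports Defs
begin




lemma mm_add_rdistrib: "((A::complex^'r^'r) + B) ** C = A ** C + B ** C"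
  by (vector matrix_matrix_mult_def sum.distrib[symmetric] field_simps)
lemma mm_diff_rdistrib: "((A::complex^'r^'r) - B) ** C = A ** C - B ** C"
  by (vector matrix_matrix_mult_def sum_subtractf[symmetric] field_simps)
lemma mm_diff_ldistrib: "(A::complex^'r^'r) ** (B - C) = A ** B - A ** C"
  by (vector matrix_matrix_mult_def sum_subtractf[symmetric] field_simps)
lemma mm_scaleR_left: "((k::real) *\<^sub>R (A::complex^'r^'r)) ** B = k *\<^sub>R (A ** B)"
  by (simp add: matrix_matrix_mult_def vec_eq_iff scaleR_sum_right)
lemma mm_scaleR_right: "(A::complex^'r^'r) ** ((k::real) *\<^sub>R B) = k *\<^sub>R (A ** B)"
  by (simp add: matrix_matrix_mult_def vec_eq_iff scaleR_sum_right)
lemma mm_sum_left: "finite S \<Longrightarrow> (\<Sum>x\<in>S. (f x::complex^'r^'r)) ** (C::complex^'r^'r) = (\<Sum>x\<in>S. f x ** C)"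
  by (induction S rule: finite_induct) (auto simp: mm_add_rdistrib)
lemma mat_of_nat: "(mat (of_nat j) :: complex^'r^'r) = real j *\<^sub>R mat 1"
  by (simp add: mat_def vec_eq_iff) (metis of_real_def of_real_of_nat_eq)
lemma mat_add: "(mat a :: complex^'r^'r) + mat b = mat (a + b)"
  by (simp add: mat_def vec_eq_iff scaleR_conv_of_real)
lemma mat_diff: "(mat a :: complex^'r^'r) - mat b = mat (a - b)"
  by (simp add: mat_def vec_eq_iff scaleR_conv_of_real)
lemma mat_comm: "(X::complex^'r^'r) ** mat c = mat c ** X"
  by (simp add: matrix_matrix_mult_def mat_def vec_eq_iff if_distrib if_distribR sum.delta sum.delta' mult.commute cong: if_cong)

definition comm :: "complex^'r^'r \<Rightarrow> complex^'r^'r \<Rightarrow> bool" where "comm X Y \<longleftrightarrow> X ** Y = Y ** X"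

lemma comm_sym: "comm X Y \<Longrightarrow> comm Y X" by (simp add: comm_def)
lemma comm_refl: "comm X X" by (simp add: comm_def)
lemma comm_mat: "comm X (mat c)" by (simp add: comm_def mat_comm)
lemma comm_add: "comm X Y \<Longrightarrow> comm X Z \<Longrightarrow> comm X (Y + Z)"
  by (simp add: comm_def matrix_add_ldistrib mm_add_rdistrib)
lemma comm_mult: "comm X Y \<Longrightarrow> comm X Z \<Longrightarrow> comm X (Y ** Z)"
  by (simp add: comm_def) (metis matrix_mul_assoc)
lemma comm_mprod: "(\<And>j. j < k \<Longrightarrow> comm X (f j)) \<Longrightarrow> comm X (mprod k f)"
  by (induction k) (auto simp: comm_mat comm_mult simp flip: mat_of_nat)
lemma comm_mpoch: "comm X Y \<Longrightarrow> comm X (mpoch Y m)"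
  unfolding mpoch_def by (rule comm_mprod) (auto intro: comm_add comm_mat)

lemma inv_props: "invertible (X::complex^'r^'r) \<Longrightarrow> X ** matrix_inv X = mat 1 \<and> matrix_inv X ** X = mat 1"
  unfolding invertible_def matrix_inv_def by (rule someI_ex)

lemma comm_inv: assumes "comm X Y" "invertible Y" shows "comm X (matrix_inv Y)"
proof -
  let ?Y = "matrix_inv Y"
  have "?Y ** X = ?Y ** X ** (Y ** ?Y)" using inv_props[OF assms(2)] by simp
  also have "\<dots> = ?Y ** (X ** Y) ** ?Y" by (simp add: matrix_mul_assoc)
  also have "\<dots> = ?Y ** (Y ** X) ** ?Y" using assms(1) by (simp add: comm_def)
  also have "\<dots> = (?Y ** Y) ** X ** ?Y" by (simp add: matrix_mul_assoc)
  also have "\<dots> = X ** ?Y" using inv_props[OF assms(2)] by simp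
  finally show ?thesis by (simp add: comm_def)
qed

lemma inv_mult: assumes "invertible (X::complex^'r^'r)" "invertible (Y::complex^'r^'r)"
  shows "matrix_inv (X ** Y) = matrix_inv Y ** matrix_inv X"
proof -
  have XY: "invertible (X ** Y)" by (rule invertible_mult[OF assms])
  let ?Z = "matrix_inv Y ** matrix_inv X"
  have "(X ** Y) ** ?Z = mat 1"
    using inv_props[OF assms(1)] inv_props[OF assms(2)]
    by (metis matrix_mul_assoc matrix_mul_lid)
  hence "matrix_inv (X ** Y) ** ((X ** Y) ** ?Z) = matrix_inv (X ** Y)" by simp
  thus ?thesis using inv_props[OF XY] by (simp add: matrix_mul_assoc)
qed


lemma mpoch_0[simp]: "mpoch X 0 = mat 1" by (simp add: mpoch_def)
lemma mpoch_Suc: "mpoch X (Suc m) = mpoch X m ** (X + mat (of_nat m))" by (simp add: mpoch_def)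

lemma mpoch_add: "mpoch (X::complex^'r^'r) (a + b) = mpoch X a ** mpoch (X + mat (of_nat a)) b"
proof (induction b)
  case 0 then show ?case by simp
next
  case (Suc b)
  have e: "X + mat (of_nat a + of_nat b) = X + mat (of_nat a) + mat (of_nat b)"
    by (simp add: mat_add add.assoc)
  show ?case using Suc by (simp add: mpoch_Suc e matrix_mul_assoc)
qed

lemma mpoch_one: "mpoch (X::complex^'r^'r) (Suc 0) = X"
  using mpoch_Suc[of X 0] by simp

lemma mpoch_shift: "mpoch (X + mat 1) M = mpoch (X::complex^'r^'r) M + real M *\<^sub>R mpoch (X + mat 1) (M - 1)"
proof (cases M)
  case 0 then show ?thesis by simp
next
  case (Suc L)
  let ?P = "mpoch (X + mat 1) L"
  have "mpoch X (1 + L) = X ** ?P" using mpoch_add[of X 1 L] by (simp add: mpoch_one)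
  moreover have c: "comm X ?P" by (rule comm_mpoch) (simp add: comm_add comm_refl comm_mat)
  moreover have "mpoch (X + mat 1) (Suc L) = ?P ** X + ?P ** mat (1 + of_nat L)"
    by (simp add: mpoch_Suc matrix_add_ldistrib mat_add add.assoc)
  moreover have "(mat (1 + of_nat L) :: complex^'r^'r) = real (Suc L) *\<^sub>R mat 1"
    using mat_of_nat[of "Suc L"] by simp
  ultimately show ?thesis using Suc by (simp add: comm_def mm_scaleR_right)
qed



definition cc :: "nat \<Rightarrow> nat \<Rightarrow> nat \<Rightarrow> nat" where
  "cc n M j = (M choose j) * (n choose j) * fact j"

lemma cc_aux: "(x::nat) * (a + b) * (s * f) = x * b * (s * f) + (s * x) * a * f"
  by (simp add: algebra_simps)

lemma cc_rec: "cc (Suc n) M (Suc j) = cc n M (Suc j) + M * cc n (M - 1) j"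
proof (cases M)
  case 0 then show ?thesis by (simp add: cc_def)
next
  case (Suc L)
  have c: "Suc j * (Suc L choose Suc j) = Suc L * (L choose j)" by (rule Suc_times_binomial)
  have a: "(Suc n choose Suc j) = (n choose j) + (n choose Suc j)" by simp
  have b: "fact (Suc j) = Suc j * (fact j :: nat)" by simp
  show ?thesis unfolding cc_def Suc a b cc_aux c diff_Suc_1 by (simp add: algebra_simps)
qed

lemma cc_0[simp]: "cc n M 0 = 1" by (simp add: cc_def)
lemma cc_big[simp]: "cc n M (Suc n) = 0" by (simp add: cc_def)

lemma P1: "mpoch ((A::complex^'r^'r) + mat (of_nat n)) M =
   (\<Sum>j\<le>n. real (cc n M j) *\<^sub>R mpoch (A + mat (of_nat j)) (M - j))"
proof (induction n arbitrary: A M)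
  case 0 then show ?case by simp
next
  case (Suc n)
  define X where "X j = mpoch (A + mat (of_nat j)) (M - j)" for j
  have e1: "A + mat (of_nat (Suc n)) = (A + mat (of_nat n)) + mat 1"
    by (simp add: mat_add add.assoc add.commute)
  have e2: "(A + mat (of_nat n)) + mat 1 = (A + mat 1) + mat (of_nat n)"
    by (simp add: add.assoc add.commute)
  have e3: "mpoch (A + mat 1 + mat (of_nat j)) (M - 1 - j) = X (Suc j)" for j
  proof -
    have h1: "A + mat 1 + mat (of_nat j) = A + mat (of_nat (Suc j))" by (simp add: add.assoc mat_add)
    have h2: "M - 1 - j = M - Suc j" by simp
    show ?thesis by (simp only: X_def h1 h2)
  qed
  have "mpoch (A + mat (of_nat (Suc n))) M
      = (\<Sum>j\<le>n. real (cc n M j) *\<^sub>R X j) + real M *\<^sub>R (\<Sum>j\<le>n. real (cc n (M-1) j) *\<^sub>R X (Suc j))"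
  proof -
    have s: "mpoch (A + mat (of_nat (Suc n))) M = mpoch (A + mat (of_nat n)) M
        + real M *\<^sub>R mpoch (A + mat 1 + mat (of_nat n)) (M - 1)"
      using mpoch_shift[of "A + mat (of_nat n)" M] e1 e2 by metis
    show ?thesis unfolding s Suc.IH[of A M] Suc.IH[of "A + mat 1" "M - 1"] e3 X_def ..
  qed
  also have "(\<Sum>j\<le>n. real (cc n M j) *\<^sub>R X j) = (\<Sum>j\<le>Suc n. real (cc n M j) *\<^sub>R X j)"
    by simp
  also have "\<dots> = X 0 + (\<Sum>j\<le>n. real (cc n M (Suc j)) *\<^sub>R X (Suc j))"
    by (subst sum.atMost_Suc_shift) simp
  finally have "mpoch (A + mat (of_nat (Suc n))) M = X 0 +
     (\<Sum>j\<le>n. real (cc n M (Suc j)) *\<^sub>R X (Suc j) + real M *\<^sub>R (real (cc n (M-1) j) *\<^sub>R X (Suc j)))"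
    by (simp add: sum.distrib scaleR_sum_right add.assoc)
  also have "\<dots> = X 0 + (\<Sum>j\<le>n. real (cc (Suc n) M (Suc j)) *\<^sub>R X (Suc j))"
    by (simp add: cc_rec scaleR_add_left)
  also have "\<dots> = (\<Sum>j\<le>Suc n. real (cc (Suc n) M j) *\<^sub>R X j)"
    by (subst sum.atMost_Suc_shift) simp
  finally show ?case by (simp add: X_def)
qed

lemma P2: "mpoch ((A::complex^'r^'r) - mat (of_nat n)) M =
   (\<Sum>j\<le>n. ((-1)^j * real (cc n M j)) *\<^sub>R mpoch A (M - j))"
proof (induction n arbitrary: M)
  case 0 then show ?case by simp
next
  case (Suc n)
  define X where "X j = mpoch A (M - j)" for j
  have e1: "(A - mat (of_nat (Suc n))) + mat 1 = A - mat (of_nat n)"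
    by (simp add: mat_add mat_diff algebra_simps)
  have sh: "mpoch (A - mat (of_nat n)) M = mpoch (A - mat (of_nat (Suc n))) M
        + real M *\<^sub>R mpoch (A - mat (of_nat n)) (M - 1)"
    using mpoch_shift[of "A - mat (of_nat (Suc n))" M] unfolding e1 .
  have e3: "mpoch A (M - 1 - j) = X (Suc j)" for j by (simp add: X_def)
  have "mpoch (A - mat (of_nat (Suc n))) M
      = (\<Sum>j\<le>n. ((-1)^j * real (cc n M j)) *\<^sub>R X j) - real M *\<^sub>R (\<Sum>j\<le>n. ((-1)^j * real (cc n (M-1) j)) *\<^sub>R X (Suc j))"
    using sh unfolding Suc.IH[of M] Suc.IH[of "M - 1"] e3 X_def by (simp add: algebra_simps)
  also have "(\<Sum>j\<le>n. ((-1)^j * real (cc n M j)) *\<^sub>R X j) = (\<Sum>j\<le>Suc n. ((-1)^j * real (cc n M j)) *\<^sub>R X j)"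
    by simp
  also have "\<dots> = X 0 + (\<Sum>j\<le>n. ((-1)^Suc j * real (cc n M (Suc j))) *\<^sub>R X (Suc j))"
    by (subst sum.atMost_Suc_shift) simp
  finally have "mpoch (A - mat (of_nat (Suc n))) M = X 0 +
     (\<Sum>j\<le>n. ((-1)^Suc j * real (cc n M (Suc j))) *\<^sub>R X (Suc j) - real M *\<^sub>R (((-1)^j * real (cc n (M-1) j)) *\<^sub>R X (Suc j)))"
    by (simp add: sum_subtractf scaleR_sum_right add_diff_eq)
  also have "\<dots> = X 0 + (\<Sum>j\<le>n. ((-1)^Suc j * real (cc (Suc n) M (Suc j))) *\<^sub>R X (Suc j))"
    by (rule arg_cong[where f="\<lambda>t. X 0 + t"], rule sum.cong, simp)
       (simp add: cc_rec algebra_simps)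
  also have "\<dots> = (\<Sum>j\<le>Suc n. ((-1)^j * real (cc (Suc n) M j)) *\<^sub>R X j)"
    by (subst sum.atMost_Suc_shift) simp
  finally show ?case by (simp add: X_def)
qed



lemma tuples_0: "tuples 0 n = {\<lambda>_. 0}"
  by (auto simp: tuples_def)

lemma tuples_Suc: "tuples (Suc k) n =
   (\<lambda>(nu,t). nu(k:=t)) ` (SIGMA nu:tuples k n. {..n - (\<Sum>i<k. nu i)})"
proof (intro equalityI subsetI)
  fix mu assume mu: "mu \<in> tuples (Suc k) n"
  let ?nu = "mu(k:=0)"
  have s: "(\<Sum>i<k. ?nu i) = (\<Sum>i<k. mu i)" by (rule sum.cong) auto
  have "?nu \<in> tuples k n" using mu s by (auto simp: tuples_def)
  moreover have "mu k \<le> n - (\<Sum>i<k. ?nu i)" using mu s by (auto simp: tuples_def)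
  moreover have "mu = ?nu(k := mu k)" by simp
  ultimately show "mu \<in> (\<lambda>(nu,t). nu(k:=t)) ` (SIGMA nu:tuples k n. {..n - (\<Sum>i<k. nu i)})"
    by (intro image_eqI[where x="(mu(k:=0), mu k)"]) auto
next
  fix mu assume "mu \<in> (\<lambda>(nu,t). nu(k:=t)) ` (SIGMA nu:tuples k n. {..n - (\<Sum>i<k. nu i)})"
  then obtain nu t where nu: "nu \<in> tuples k n" and t: "t \<le> n - (\<Sum>i<k. nu i)" and mu: "mu = nu(k:=t)"
    by auto
  have s: "(\<Sum>i<k. mu i) = (\<Sum>i<k. nu i)" unfolding mu by (rule sum.cong) auto
  show "mu \<in> tuples (Suc k) n" using nu t s by (auto simp: tuples_def mu)
qed

lemma tuples_inj: "inj_on (\<lambda>(nu,t). nu(k:=t)) (SIGMA nu:tuples k n. {..n - (\<Sum>i<k. nu i)})"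
proof (rule inj_onI, clarify)
  fix nu t nu' t'
  assume a: "nu \<in> tuples k n" "nu' \<in> tuples k n" and e: "nu(k := t) = nu'(k := t')"
  from e have "t = t'" by (metis fun_upd_same)
  moreover have "nu = nu'"
  proof
    fix i show "nu i = nu' i"
      using a e by (cases "i = k") (auto simp: tuples_def dest: fun_cong[where x=i])
  qed
  ultimately show "nu = nu' \<and> t = t'" by simp
qed

lemma tuples_finite: "finite (tuples k n)"
  by (induction k) (auto simp: tuples_0 tuples_Suc)

lemma double_tri: "(\<Sum>j\<le>(n::nat). \<Sum>t\<le>n-j. G j t) = (\<Sum>s\<le>n. \<Sum>i\<le>s. G i (s - i))"
proof -
  have "(\<Sum>j\<le>n. \<Sum>t\<le>n-j. G j t) = (\<Sum>(i,t)\<in>(SIGMA i:{..n}. {..n-i}). G i t)"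
    using sum.Sigma[of "{..n}" "\<lambda>i. {..n-i}" G] by simp
  also have "(SIGMA i:{..n}. {..n-i}) = {(i,t). i + t \<le> n}" by auto
  also have "(\<Sum>(i,t)\<in>{(i,t). i + t \<le> n}. G i t) = (\<Sum>s\<le>n. \<Sum>i\<le>s. G i (s - i))"
    by (rule sum.triangle_reindex_eq)
  finally show ?thesis .
qed

lemma V: "(\<Sum>nu\<in>tuples k n. (\<Prod>i<k. real (m i choose nu i)) *\<^sub>R (g (\<Sum>i<k. nu i) :: 'a::real_vector))
   = (\<Sum>j\<le>n. real ((\<Sum>i<k. m i) choose j) *\<^sub>R g j)"
proof (induction k arbitrary: n g)
  case 0
  have "(\<Sum>j\<le>n. real (0 choose j) *\<^sub>R g j) = g 0" by (induction n) auto
  then show ?case by (simp add: tuples_0)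
next
  case (Suc k)
  let ?M = "\<Sum>i<k. m i"
  define g' where "g' j = (\<Sum>t\<le>n-j. real (m k choose t) *\<^sub>R g (j + t))" for j
  have "(\<Sum>nu\<in>tuples (Suc k) n. (\<Prod>i<Suc k. real (m i choose nu i)) *\<^sub>R g (\<Sum>i<Suc k. nu i))
     = (\<Sum>(nu,t)\<in>(SIGMA nu:tuples k n. {..n - (\<Sum>i<k. nu i)}).
          (\<Prod>i<Suc k. real (m i choose (nu(k:=t)) i)) *\<^sub>R g (\<Sum>i<Suc k. (nu(k:=t)) i))"
    unfolding tuples_Suc by (subst sum.reindex[OF tuples_inj]) (simp add: case_prod_beta)
  also have "\<dots> = (\<Sum>nu\<in>tuples k n. \<Sum>t\<le>n - (\<Sum>i<k. nu i).
          (\<Prod>i<Suc k. real (m i choose (nu(k:=t)) i)) *\<^sub>R g (\<Sum>i<Suc k. (nu(k:=t)) i))"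
    by (rule sum.Sigma[symmetric]) (auto simp: tuples_finite)
  also have "\<dots> = (\<Sum>nu\<in>tuples k n. (\<Prod>i<k. real (m i choose nu i)) *\<^sub>R g' (\<Sum>i<k. nu i))"
  proof (rule sum.cong[OF refl])
    fix nu assume nu: "nu \<in> tuples k n"
    have p: "(\<Prod>i<k. real (m i choose (nu(k:=t)) i)) = (\<Prod>i<k. real (m i choose nu i))" for t
      by (rule prod.cong) auto
    have s: "(\<Sum>i<k. (nu(k:=t)) i) = (\<Sum>i<k. nu i)" for t
      by (rule sum.cong) auto
    show "(\<Sum>t\<le>n - (\<Sum>i<k. nu i).
          (\<Prod>i<Suc k. real (m i choose (nu(k:=t)) i)) *\<^sub>R g (\<Sum>i<Suc k. (nu(k:=t)) i))
        = (\<Prod>i<k. real (m i choose nu i)) *\<^sub>R g' (\<Sum>i<k. nu i)"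
      unfolding g'_def scaleR_sum_right
      by (rule sum.cong[OF refl]) (simp add: p s add.commute)
  qed
  also have "\<dots> = (\<Sum>j\<le>n. real (?M choose j) *\<^sub>R g' j)" by (rule Suc.IH)
  also have "\<dots> = (\<Sum>j\<le>n. \<Sum>t\<le>n-j. (real (?M choose j) * real (m k choose t)) *\<^sub>R g (j + t))"
    unfolding g'_def scaleR_sum_right by simp
  also have "\<dots> = (\<Sum>s\<le>n. \<Sum>i\<le>s. (real (?M choose i) * real (m k choose (s - i))) *\<^sub>R g (i + (s - i)))"
    by (rule double_tri)
  also have "\<dots> = (\<Sum>s\<le>n. real ((?M + m k) choose s) *\<^sub>R g s)"
  proof (rule sum.cong[OF refl])
    fix s
    have "(\<Sum>i\<le>s. (real (?M choose i) * real (m k choose (s - i))) *\<^sub>R g (i + (s - i)))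
        = (\<Sum>i\<le>s. (real (?M choose i) * real (m k choose (s - i))) *\<^sub>R g s)"
      by (rule sum.cong) auto
    also have "\<dots> = real ((?M + m k) choose s) *\<^sub>R g s"
      unfolding vandermonde[symmetric] scaleR_sum_left[symmetric] by simp
    finally show "(\<Sum>i\<le>s. (real (?M choose i) * real (m k choose (s - i))) *\<^sub>R g (i + (s - i)))
        = real ((?M + m k) choose s) *\<^sub>R g s" .
  qed
  finally show ?case by simp
qed



lemma mprod_cong: "(\<And>i. i < k \<Longrightarrow> f i = g i) \<Longrightarrow> mprod k f = mprod k g"
  by (induction k) auto

lemma mprod_mult:
  assumes "\<And>i j. i < k \<Longrightarrow> j < k \<Longrightarrow> comm (f i) (g j)"
  shows "mprod k f ** mprod k g = mprod k (\<lambda>i. f i ** g i)"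
  using assms
proof (induction k)
  case 0 then show ?case by simp
next
  case (Suc k)
  have IH: "mprod k f ** mprod k g = mprod k (\<lambda>i. f i ** g i)" using Suc by auto
  have c: "comm (f k) (mprod k g)" by (rule comm_mprod) (use Suc.prems in auto)
  have "mprod (Suc k) f ** mprod (Suc k) g = mprod k f ** (f k ** mprod k g) ** g k"
    by (simp add: matrix_mul_assoc)
  also have "\<dots> = mprod k f ** (mprod k g ** f k) ** g k" using c by (simp add: comm_def)
  also have "\<dots> = (mprod k f ** mprod k g) ** (f k ** g k)" by (simp add: matrix_mul_assoc)
  finally show ?case using IH by simp
qed

lemma comm_addR: "comm X Y \<Longrightarrow> comm X (Y + mat a)"
  by (intro comm_add comm_mat)
lemma comm_addL: "comm X Y \<Longrightarrow> comm (X + mat a) Y"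
  by (rule comm_sym, rule comm_addR, rule comm_sym)
lemma comm_poch2: "comm X Y \<Longrightarrow> comm (mpoch X b) (mpoch Y d)"
  by (rule comm_sym, rule comm_mpoch, rule comm_sym, rule comm_mpoch)

lemma invertible_mat1: "invertible (mat 1 :: complex^'r^'r)"
  unfolding invertible_def by (intro exI[of _ "mat 1"]) simp

lemma invertible_mpoch:
  assumes "\<And>l. invertible ((X::complex^'r^'r) + mat (of_nat l))"
  shows "invertible (mpoch X b)"
  by (induction b) (simp_all add: mpoch_Suc invertible_mat1 invertible_mult assms)

lemma comm_poch_inv2:
  assumes "comm X Y" "\<And>l. invertible ((X::complex^'r^'r) + mat (of_nat l))"
    "\<And>l. invertible ((Y::complex^'r^'r) + mat (of_nat l))"
  shows "comm (mpoch_inv X b) (mpoch_inv Y d)"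
  unfolding mpoch_inv_def
  apply (rule comm_sym, rule comm_inv, rule comm_sym, rule comm_inv)
     apply (rule comm_poch2, rule assms(1))
    apply (rule invertible_mpoch, rule assms(3))
   apply (rule invertible_mpoch, rule assms(2))
  done

lemma mpoch_inv_add:
  assumes "\<And>l. invertible ((X::complex^'r^'r) + mat (of_nat l))"
  shows "mpoch_inv X (a + b) = mpoch_inv (X + mat (of_nat a)) b ** mpoch_inv X a"
proof -
  have "\<And>l. invertible (X + mat (of_nat a) + mat (of_nat l))"
  proof -
    fix l show "invertible (X + mat (of_nat a) + mat (of_nat l))"
      using assms[of "a + l"] by (simp add: add.assoc mat_add)
  qed
  then show ?thesis unfolding mpoch_inv_def mpoch_add
    by (intro inv_mult invertible_mpoch assms)
qed



lemma xterm:
  fixes A' :: "complex^'r^'r" and c :: real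
  assumes nu: "nu \<in> tuples k n" and sm: "\<forall>i\<ge>k. m i = 0"
    and hA: "\<And>i. i < k \<Longrightarrow> comm A' (B i)"
    and hB: "\<And>i j. i < k \<Longrightarrow> j < k \<Longrightarrow> comm (B i) (B j)"
    and hC: "\<And>i j. i < k \<Longrightarrow> j < k \<Longrightarrow> comm (C i) (C j)"
    and hCi: "\<And>i l. i < k \<Longrightarrow> invertible (C i + mat (of_nat l))"
  shows "mprod k (\<lambda>i. mpoch (B i) (nu i))
     ** xmono k (\<lambda>_. c) nu (FA k A' (\<lambda>i. B i + mat (of_nat (nu i))) (\<lambda>i. C i + mat (of_nat (nu i)))) m
     ** mprod k (\<lambda>i. mpoch_inv (C i) (nu i))
   = (if \<forall>i. nu i \<le> m i then (c ^ (\<Sum>i<k. nu i) / (\<Prod>i<k. fact (m i - nu i))) *\<^sub>R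
        (mpoch A' ((\<Sum>i<k. m i) - (\<Sum>i<k. nu i)) ** mprod k (\<lambda>i. mpoch (B i) (m i))
          ** mprod k (\<lambda>i. mpoch_inv (C i) (m i))) else 0)"
proof (cases "\<forall>i. nu i \<le> m i")
  case False
  then show ?thesis unfolding xmono_def by (simp only: if_not_P[OF False]) simp
next
  case le: True
  define Pn where "Pn = mprod k (\<lambda>i. mpoch (B i) (nu i))"
  define P' where "P' = mprod k (\<lambda>i. mpoch (B i + mat (of_nat (nu i))) (m i - nu i))"
  define Pm where "Pm = mprod k (\<lambda>i. mpoch (B i) (m i))"
  define Qn where "Qn = mprod k (\<lambda>i. mpoch_inv (C i) (nu i))"
  define Q' where "Q' = mprod k (\<lambda>i. mpoch_inv (C i + mat (of_nat (nu i))) (m i - nu i))"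
  define Qm where "Qm = mprod k (\<lambda>i. mpoch_inv (C i) (m i))"
  define H where "H = mpoch A' ((\<Sum>i<k. m i) - (\<Sum>i<k. nu i))"
  define s where "s = c ^ (\<Sum>i<k. nu i) / (\<Prod>i<k. fact (m i - nu i))"
  have supp': "\<forall>i\<ge>k. m i - nu i = 0" using sm by simp
  have sumd: "(\<Sum>i<k. m i - nu i) = (\<Sum>i<k. m i) - (\<Sum>i<k. nu i)"
    by (rule sum_subtractf_nat) (use le in auto)
  have xm: "xmono k (\<lambda>_. c) nu (FA k A' (\<lambda>i. B i + mat (of_nat (nu i))) (\<lambda>i. C i + mat (of_nat (nu i)))) m
      = s *\<^sub>R (H ** P' ** Q')"
    unfolding xmono_def FA_def using le supp'
    by (simp add: sumd H_def P'_def Q'_def s_def power_sum divide_inverse mult.commute)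
  have PP: "Pn ** P' = Pm"
  proof -
    have "Pn ** P' = mprod k (\<lambda>i. mpoch (B i) (nu i) ** mpoch (B i + mat (of_nat (nu i))) (m i - nu i))"
      unfolding Pn_def P'_def
      by (rule mprod_mult) (intro comm_poch2 comm_addR hB)
    also have "\<dots> = Pm" unfolding Pm_def
      by (rule mprod_cong) (use le in \<open>simp add: mpoch_add[symmetric]\<close>)
    finally show ?thesis .
  qed
  have QQ: "Q' ** Qn = Qm"
  proof -
    have inv1: "invertible (C i + mat (of_nat a) + mat (of_nat l))" if "i < k" for i a l
      using hCi[OF that, of "a + l"] by (simp add: add.assoc mat_add)
    have "Q' ** Qn = mprod k (\<lambda>i. mpoch_inv (C i + mat (of_nat (nu i))) (m i - nu i) ** mpoch_inv (C i) (nu i))"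
      unfolding Q'_def Qn_def
      by (rule mprod_mult) (intro comm_poch_inv2 comm_addL hC inv1 hCi; simp)
    also have "\<dots> = Qm" unfolding Qm_def
      by (rule mprod_cong) (use le in \<open>simp add: mpoch_inv_add[symmetric] hCi\<close>)
    finally show ?thesis .
  qed
  have HP: "comm H Pn" unfolding H_def Pn_def
    by (rule comm_mprod) (intro comm_poch2 hA)
  have "Pn ** (s *\<^sub>R (H ** P' ** Q')) ** Qn = s *\<^sub>R (((Pn ** H) ** P') ** Q' ** Qn)"
    by (simp add: mm_scaleR_left mm_scaleR_right matrix_mul_assoc)
  also have "\<dots> = s *\<^sub>R (H ** (Pn ** P') ** (Q' ** Qn))"
    using HP by (simp add: comm_def matrix_mul_assoc)
  finally show ?thesis using le xm PP QQ
    by (simp add: Pn_def Qn_def H_def Pm_def Qm_def s_def)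
qed


lemma coef:
  fixes c :: real
  assumes nu: "nu \<in> tuples k n" and le: "\<forall>i. nu i \<le> m i"
  shows "multinom n k nu * (c ^ (\<Sum>i<k. nu i) / (\<Prod>i<k. fact (m i - nu i)))
     = (\<Prod>i<k. real (m i choose nu i)) *
       (real (n choose (\<Sum>i<k. nu i)) * fact (\<Sum>i<k. nu i) * c ^ (\<Sum>i<k. nu i) / (\<Prod>i<k. fact (m i)))"
proof -
  define N where "N = (\<Sum>i<k. nu i)"
  have Nn: "N \<le> n" using nu by (simp add: tuples_def N_def)
  have f1: "(fact n :: real) = real (n choose N) * fact N * fact (n - N)"
  proof -
    have "fact N * fact (n - N) * (n choose N) = (fact n :: nat)" by (rule binomial_fact_lemma[OF Nn])
    then have "real (fact N * fact (n - N) * (n choose N)) = real (fact n)" by simp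
    then show ?thesis by (simp add: of_nat_fact algebra_simps)
  qed
  have fi: "(fact (m i) :: real) = real (m i choose nu i) * fact (nu i) * fact (m i - nu i)" for i
  proof -
    have "fact (nu i) * fact (m i - nu i) * (m i choose nu i) = (fact (m i) :: nat)"
      by (rule binomial_fact_lemma) (use le in auto)
    then have "real (fact (nu i) * fact (m i - nu i) * (m i choose nu i)) = real (fact (m i))" by simp
    then show ?thesis by (simp add: of_nat_fact algebra_simps)
  qed
  have f2: "(\<Prod>i<k. fact (m i) :: real) = (\<Prod>i<k. real (m i choose nu i)) * (\<Prod>i<k. fact (nu i)) * (\<Prod>i<k. fact (m i - nu i))"
    by (simp add: fi prod.distrib)
  have p1: "(\<Prod>i<k. real (m i choose nu i)) \<noteq> 0"
    using le by (auto simp: prod_zero_iff not_less)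
  have p2: "(\<Prod>i<k. fact (nu i) :: real) \<noteq> 0" by (simp add: prod_zero_iff)
  have p3: "(\<Prod>i<k. fact (m i - nu i) :: real) \<noteq> 0" by (simp add: prod_zero_iff)
  have p4: "(fact (n - N) :: real) \<noteq> 0" by simp
  show ?thesis unfolding N_def[symmetric] multinom_def f2 f1
    using p1 p2 p3 p4 by (simp add: field_simps)
qed

lemma assemble:
  fixes H :: "nat \<Rightarrow> complex^'r^'r" and c :: real
  assumes sm: "\<forall>i\<ge>k. m i = 0"
    and hA: "\<And>j i. i < k \<Longrightarrow> comm (H j) (B i)"
    and hB: "\<And>i j. i < k \<Longrightarrow> j < k \<Longrightarrow> comm (B i) (B j)"
    and hC: "\<And>i j. i < k \<Longrightarrow> j < k \<Longrightarrow> comm (C i) (C j)"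
    and hCi: "\<And>i l. i < k \<Longrightarrow> invertible (C i + mat (of_nat l))"
  shows "(\<Sum>nu\<in>tuples k n. multinom n k nu *\<^sub>R
              (mprod k (\<lambda>i. mpoch (B i) (nu i))
               ** xmono k (\<lambda>_. c) nu
                    (FA k (H (\<Sum>i<k. nu i)) (\<lambda>i. B i + mat (of_nat (nu i)))
                          (\<lambda>i. C i + mat (of_nat (nu i)))) m
               ** mprod k (\<lambda>i. mpoch_inv (C i) (nu i))))
   = (1 / (\<Prod>i<k. fact (m i))) *\<^sub>R
       ((\<Sum>j\<le>n. (c ^ j * real (cc n (\<Sum>i<k. m i) j)) *\<^sub>R mpoch (H j) ((\<Sum>i<k. m i) - j))
         ** mprod k (\<lambda>i. mpoch (B i) (m i)) ** mprod k (\<lambda>i. mpoch_inv (C i) (m i)))"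
proof -
  define M where "M = (\<Sum>i<k. m i)"
  define Pm where "Pm = mprod k (\<lambda>i. mpoch (B i) (m i))"
  define Qm where "Qm = mprod k (\<lambda>i. mpoch_inv (C i) (m i))"
  define g where "g j = (real (n choose j) * fact j * c ^ j / (\<Prod>i<k. fact (m i))) *\<^sub>R mpoch (H j) (M - j)" for j
  have step1: "multinom n k nu *\<^sub>R
              (mprod k (\<lambda>i. mpoch (B i) (nu i))
               ** xmono k (\<lambda>_. c) nu
                    (FA k (H (\<Sum>i<k. nu i)) (\<lambda>i. B i + mat (of_nat (nu i)))
                          (\<lambda>i. C i + mat (of_nat (nu i)))) m
               ** mprod k (\<lambda>i. mpoch_inv (C i) (nu i)))
     = ((\<Prod>i<k. real (m i choose nu i)) *\<^sub>R g (\<Sum>i<k. nu i)) ** Pm ** Qm"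
    if nu: "nu \<in> tuples k n" for nu
  proof -
    have hA': "\<And>i. i < k \<Longrightarrow> comm (H (\<Sum>i<k. nu i)) (B i)" by (rule hA)
    show ?thesis
  proof (cases "\<forall>i. nu i \<le> m i")
    case le: True
    note X = xterm[where B=B and C=C and c=c and m=m, OF nu sm hA' hB hC hCi]
    have X2: "mprod k (\<lambda>i. mpoch (B i) (nu i))
               ** xmono k (\<lambda>_. c) nu
                    (FA k (H (\<Sum>i<k. nu i)) (\<lambda>i. B i + mat (of_nat (nu i)))
                          (\<lambda>i. C i + mat (of_nat (nu i)))) m
               ** mprod k (\<lambda>i. mpoch_inv (C i) (nu i)) = 
       (c ^ (\<Sum>i<k. nu i) / (\<Prod>i<k. fact (m i - nu i))) *\<^sub>R
        (mpoch (H (\<Sum>i<k. nu i)) ((\<Sum>i<k. m i) - (\<Sum>i<k. nu i)) ** mprod k (\<lambda>i. mpoch (B i) (m i))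
          ** mprod k (\<lambda>i. mpoch_inv (C i) (m i)))"
      using X le by simp
    show ?thesis
      unfolding X2 scaleR_scaleR coef[OF nu le]
      by (simp add: g_def M_def Pm_def Qm_def mm_scaleR_left)
  next
    case False
    then obtain i where i: "m i < nu i" by (auto simp: not_le)
    have "i < k" using i nu sm by (auto simp: tuples_def) (metis not_less less_nat_zero_code)
    then have z: "(\<Prod>i<k. real (m i choose nu i)) = 0" using i by (auto simp: prod_zero_iff)
    note X = xterm[where B=B and C=C and c=c and m=m, OF nu sm hA' hB hC hCi]
    have X2: "mprod k (\<lambda>i. mpoch (B i) (nu i))
               ** xmono k (\<lambda>_. c) nu
                    (FA k (H (\<Sum>i<k. nu i)) (\<lambda>i. B i + mat (of_nat (nu i)))
                          (\<lambda>i. C i + mat (of_nat (nu i)))) m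
               ** mprod k (\<lambda>i. mpoch_inv (C i) (nu i)) = 0"
      using X False by simp
    show ?thesis unfolding X2 z by simp
  qed
  qed
  have "(\<Sum>nu\<in>tuples k n. multinom n k nu *\<^sub>R
              (mprod k (\<lambda>i. mpoch (B i) (nu i))
               ** xmono k (\<lambda>_. c) nu
                    (FA k (H (\<Sum>i<k. nu i)) (\<lambda>i. B i + mat (of_nat (nu i)))
                          (\<lambda>i. C i + mat (of_nat (nu i)))) m
               ** mprod k (\<lambda>i. mpoch_inv (C i) (nu i))))
     = (\<Sum>nu\<in>tuples k n. ((\<Prod>i<k. real (m i choose nu i)) *\<^sub>R g (\<Sum>i<k. nu i)) ** Pm ** Qm)"
    by (rule sum.cong[OF refl]) (rule step1)
  also have "\<dots> = (\<Sum>nu\<in>tuples k n. (\<Prod>i<k. real (m i choose nu i)) *\<^sub>R g (\<Sum>i<k. nu i)) ** Pm ** Qm"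
    by (simp add: mm_sum_left tuples_finite)
  also have "(\<Sum>nu\<in>tuples k n. (\<Prod>i<k. real (m i choose nu i)) *\<^sub>R g (\<Sum>i<k. nu i))
      = (\<Sum>j\<le>n. real (M choose j) *\<^sub>R g j)" unfolding M_def by (rule V)
  also have "\<dots> = (1 / (\<Prod>i<k. fact (m i))) *\<^sub>R
        (\<Sum>j\<le>n. (c ^ j * real (cc n M j)) *\<^sub>R mpoch (H j) (M - j))"
    unfolding scaleR_sum_right
    by (rule sum.cong[OF refl]) (simp add: g_def cc_def)
  finally show ?thesis by (simp add: M_def Pm_def Qm_def mm_scaleR_left)
qed


lemma xmono_nonsupp:
  assumes "nu \<in> tuples k n" "\<not> (\<forall>i\<ge>k. m i = 0)"
  shows "xmono k c nu (FA k A' B' C') m = 0"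
proof -
  from assms(2) obtain i where i: "i \<ge> k" "m i \<noteq> 0" by auto
  have "nu i = 0" using assms(1) i by (simp add: tuples_def)
  then have ns: "\<not> (\<forall>j\<ge>k. m j - nu j = 0)" using i by (intro notI) (metis diff_zero)
  show ?thesis unfolding xmono_def FA_def if_not_P[OF ns] by simp
qed

theorem mainTheorem2:
  fixes k n :: nat and A :: "complex^'r^'r" and B C :: "nat \<Rightarrow> complex^'r^'r"
  assumes "k \<ge> 1" and "n \<ge> 1"
    and "\<And>i m. i < k \<Longrightarrow> invertible (C i + mat (of_nat m))"
    and "\<And>i. i < k \<Longrightarrow> A ** B i = B i ** A"
    and "\<And>i j. i < k \<Longrightarrow> j < k \<Longrightarrow> B i ** B j = B j ** B i"
    and "\<And>i j. i < k \<Longrightarrow> j < k \<Longrightarrow> C i ** C j = C j ** C i"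
    and "\<And>m. invertible (A + mat (of_nat m))"
  shows "FA k (A + mat (of_nat n)) B C =
           (\<lambda>m. \<Sum>nu\<in>tuples k n. multinom n k nu *\<^sub>R
              (mprod k (\<lambda>i. mpoch (B i) (nu i))
               ** xmono k (\<lambda>_. 1) nu
                    (FA k (A + mat (of_nat (\<Sum>i<k. nu i))) (\<lambda>i. B i + mat (of_nat (nu i)))
                          (\<lambda>i. C i + mat (of_nat (nu i)))) m
               ** mprod k (\<lambda>i. mpoch_inv (C i) (nu i))))
       \<and> ((\<forall>n1\<le>n. invertible (A - mat (of_nat n1))) \<longrightarrow>
          FA k (A - mat (of_nat n)) B C =
           (\<lambda>m. \<Sum>nu\<in>tuples k n. multinom n k nu *\<^sub>R
              (mprod k (\<lambda>i. mpoch (B i) (nu i))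
               ** xmono k (\<lambda>_. -1) nu
                    (FA k A (\<lambda>i. B i + mat (of_nat (nu i)))
                          (\<lambda>i. C i + mat (of_nat (nu i)))) m
               ** mprod k (\<lambda>i. mpoch_inv (C i) (nu i)))))"
proof -
  have hCi: "\<And>i l. i < k \<Longrightarrow> invertible (C i + mat (of_nat l))" by (rule assms(3))
  have hB: "\<And>i j. i < k \<Longrightarrow> j < k \<Longrightarrow> comm (B i) (B j)" using assms(5) by (simp add: comm_def)
  have hC: "\<And>i j. i < k \<Longrightarrow> j < k \<Longrightarrow> comm (C i) (C j)" using assms(6) by (simp add: comm_def)
  have hA0: "\<And>i. i < k \<Longrightarrow> comm A (B i)" using assms(4) by (simp add: comm_def)
  have hA1: "\<And>j i. i < k \<Longrightarrow> comm ((\<lambda>j. A + mat (of_nat j)) j) (B i)"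
    by (simp add: comm_addL hA0)
  have hA2: "\<And>j i. i < k \<Longrightarrow> comm ((\<lambda>j. A) j) (B i)" by (simp add: hA0)
  have part1: "FA k (A + mat (of_nat n)) B C m =
           (\<Sum>nu\<in>tuples k n. multinom n k nu *\<^sub>R
              (mprod k (\<lambda>i. mpoch (B i) (nu i))
               ** xmono k (\<lambda>_. 1) nu
                    (FA k (A + mat (of_nat (\<Sum>i<k. nu i))) (\<lambda>i. B i + mat (of_nat (nu i)))
                          (\<lambda>i. C i + mat (of_nat (nu i)))) m
               ** mprod k (\<lambda>i. mpoch_inv (C i) (nu i))))" for m
  proof (cases "\<forall>i\<ge>k. m i = 0")
    case True
    note X = assemble[where H="\<lambda>j. A + mat (of_nat j)" and c=1 and n=n, OF True hA1 hB hC hCi]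
    have eq: "mpoch (A + mat (of_nat n)) (\<Sum>i<k. m i) = (\<Sum>j\<le>n. real (cc n (\<Sum>i<k. m i) j) *\<^sub>R mpoch (A + mat (of_nat j)) ((\<Sum>i<k. m i) - j))"
      by (rule P1)
    have R: "(\<Sum>nu\<in>tuples k n. multinom n k nu *\<^sub>R
              (mprod k (\<lambda>i. mpoch (B i) (nu i))
               ** xmono k (\<lambda>_. 1) nu
                    (FA k (A + mat (of_nat (\<Sum>i<k. nu i))) (\<lambda>i. B i + mat (of_nat (nu i)))
                          (\<lambda>i. C i + mat (of_nat (nu i)))) m
               ** mprod k (\<lambda>i. mpoch_inv (C i) (nu i))))
       = (1 / (\<Prod>i<k. fact (m i))) *\<^sub>R
       ((\<Sum>j\<le>n. real (cc n (\<Sum>i<k. m i) j) *\<^sub>R mpoch (A + mat (of_nat j)) ((\<Sum>i<k. m i) - j))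
         ** mprod k (\<lambda>i. mpoch (B i) (m i)) ** mprod k (\<lambda>i. mpoch_inv (C i) (m i)))"
      using X by simp
    show ?thesis unfolding R FA_def if_P[OF True] eq by simp
  next
    case False
    have z: "FA k X B C m = 0" for X unfolding FA_def by (simp only: if_not_P[OF False])
    show ?thesis unfolding z using False by (simp add: xmono_nonsupp)
  qed
  have part2: "FA k (A - mat (of_nat n)) B C m =
           (\<Sum>nu\<in>tuples k n. multinom n k nu *\<^sub>R
              (mprod k (\<lambda>i. mpoch (B i) (nu i))
               ** xmono k (\<lambda>_. -1) nu
                    (FA k A (\<lambda>i. B i + mat (of_nat (nu i)))
                          (\<lambda>i. C i + mat (of_nat (nu i)))) m
               ** mprod k (\<lambda>i. mpoch_inv (C i) (nu i))))" for m
  proof (cases "\<forall>i\<ge>k. m i = 0")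
    case True
    note X = assemble[where H="\<lambda>j. A" and c="-1" and n=n, OF True hA2 hB hC hCi]
    have eq: "mpoch (A - mat (of_nat n)) (\<Sum>i<k. m i) = (\<Sum>j\<le>n. ((-1) ^ j * real (cc n (\<Sum>i<k. m i) j)) *\<^sub>R mpoch A ((\<Sum>i<k. m i) - j))"
      by (rule P2)
    have R: "(\<Sum>nu\<in>tuples k n. multinom n k nu *\<^sub>R
              (mprod k (\<lambda>i. mpoch (B i) (nu i))
               ** xmono k (\<lambda>_. -1) nu
                    (FA k A (\<lambda>i. B i + mat (of_nat (nu i)))
                          (\<lambda>i. C i + mat (of_nat (nu i)))) m
               ** mprod k (\<lambda>i. mpoch_inv (C i) (nu i))))
       = (1 / (\<Prod>i<k. fact (m i))) *\<^sub>R
       ((\<Sum>j\<le>n. ((-1) ^ j * real (cc n (\<Sum>i<k. m i) j)) *\<^sub>R mpoch A ((\<Sum>i<k. m i) - j))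
         ** mprod k (\<lambda>i. mpoch (B i) (m i)) ** mprod k (\<lambda>i. mpoch_inv (C i) (m i)))"
      using X by simp
    show ?thesis unfolding R FA_def if_P[OF True] eq by simp
  next
    case False
    have z: "FA k X B C m = 0" for X unfolding FA_def by (simp only: if_not_P[OF False])
    show ?thesis unfolding z using False by (simp add: xmono_nonsupp)
  qed
  show ?thesis using part1 part2 by auto
qed


end
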